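(* Let $\tilde R<0$ and let $\mathcal G=(\bar Q,\mu,\eta)$ be an intervention rule whose intervention set $\mathcal I$ is partial. Let $\pi$ be a policy that is $\varepsilon$-suboptimal for the absorbing MDP $\tilde{\mathcal M}$, and let $\pi'=\mathcal G(\pi)$. Then for any policy $\pi^*$, $$V^{\pi^*}(d_0)-V^\pi(d_0)\le\Big(|\tilde R|+\frac1{1-\gamma}\Big)P_{\mathcal G}(\pi^* )+\varepsilon,\qquad \bar V^\pi(d_0)\le\bar V^{\pi'}(d_0)+\frac{\varepsilon}{|\tilde R|}.$$
   Context: $\mathcal M=(\mathcal S,\mathcal A,P,r,\gamma)$ is a discounted MDP with discrete state and action spaces, reward $r(s,a)\in[0,1]$, discount $\gamma\in[0,1)$, initial distribution $d_0$. $\mathcal S$ contains two distinguished states $s_\triangleright,s_\circ$; $\mathcal S_{\mathrm{unsafe}}=\{s_\triangleright,s_\circ\}$, $\mathcal S_{\mathrm{safe}}=\mathcal S\setminus\mathcal S_{\mathrm{unsafe}}$; from $s_\triangleright$ every action leads to $s_\circ$ w.p. 1, $s_\circ$ is absorbing, $r=0$ on $\mathcal S_{\mathrm{unsafe}}$, $d_0(s_\circ)=0$. Cost $c(s,a)=\mathbb 1\{s=s_\triangleright\}$. For a stationary policy $\pi$ with trajectory law $\rho^\pi$ in $\mathcal M$ ($s_0\sim d_0$): $V^\pi(d_0)=\mathbb E_{\rho^\pi}[\sum_t\gamma^tr(s_t,a_t)]$, $\bar V^\pi(d_0)=\mathbb E_{\rho^\pi}[\sum_t\gamma^tc(s_t,a_t)]$.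 Intervention rule: $\mathcal G=(\bar Q,\mu,\eta)$ with backup policy $\mu$, $\eta\in[0,1]$, $\bar Q:\mathcal S_{\mathrm{safe}}\times\mathcal A\to[0,1]$; intervention set $\mathcal I=\{(s,a)\in\mathcal S_{\mathrm{safe}}\times\mathcal A:\bar Q(s,a)-\mathbb E_{a'\sim\mu(\cdot|s)}\bar Q(s,a')>\eta\}$; shielded policy $\mathcal G(\pi)(a|s)=\pi(a|s)\mathbb 1\{(s,a)\notin\mathcal I\}+w(s)\mu(a|s)$, $w(s)=\sum_{\tilde a:(s,\tilde a)\in\mathcal I}\pi(\tilde a|s)$. A set $\mathcal X\subseteq\mathcal S_{\mathrm{safe}}\times\mathcal A$ is partial if for every $(s,a)\in\mathcal X$ there is $a'$ with $(s,a')\notin\mathcal X$. Absorbing MDP: $\tilde{\mathcal M}=(\mathcal S\cup\{s_\dagger\},\mathcal A,\tilde P,\tilde r,\gamma)$: $\tilde r(s,a)=\tilde R$ if $(s,a)\in\mathcal I$, $\tilde r(s_\dagger,a)=0$, $\tilde r=r$ otherwise; $\tilde P(\cdot|s,a)$ is the point mass at $s_\dagger$ if $(s,a)\in\mathcal I$ or $s=s_\dagger$, else $P(\cdot|s,a)$. Policies are extended to $s_\dagger$ arbitrarily; $\tilde V^\pi(d_0)$ is the value in $\tilde{\mathcal M}$; $\tilde V^*(d_0)=\sup_\pi\tilde V^\pi(d_0)$; $\pi$ is $\varepsilon$-suboptimal if $\tilde V^*(d_0)-\tilde V^\pi(d_0)\le\varepsilon$. $P_{\mathcal G}(\pi)=(1-\gamma)\sum_{h\ge0}\gamma^h\Pr_{\rho^\pi}(\exists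 t\le h:(s_t,a_t)\in\mathcal I)$. *)

theory Defs
  imports "HOL-Probability.Probability"
begin

text \<open>Transition kernel P, stationary policy pol, initial distribution d0.
  traj P pol d0 h is the law of the trajectory prefix
  ((s_0,a_0),...,(s_h,a_h)) under the trajectory law rho^pol.\<close>

fun traj :: "('x \<Rightarrow> 'a \<Rightarrow> 'x pmf) \<Rightarrow> ('x \<Rightarrow> 'a pmf) \<Rightarrow> 'x pmf \<Rightarrow> nat \<Rightarrow> ('x \<times> 'a) list pmf" where
  "traj P pol d0 0 =
     bind_pmf d0 (\<lambda>s. bind_pmf (pol s) (\<lambda>a. return_pmf [(s, a)]))"
| "traj P pol d0 (Suc h) =
     bind_pmf (traj P pol d0 h) (\<lambda>xs.
       bind_pmf (P (fst (last xs)) (snd (last xs))) (\<lambda>s'.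
         bind_pmf (pol s') (\<lambda>a'. return_pmf (xs @ [(s', a')]))))"

definition disc_value ::
  "('x \<Rightarrow> 'a \<Rightarrow> 'x pmf) \<Rightarrow> ('x \<Rightarrow> 'a pmf) \<Rightarrow> 'x pmf \<Rightarrow> real \<Rightarrow> ('x \<Rightarrow> 'a \<Rightarrow> real) \<Rightarrow> real" where
  "disc_value P pol d0 \<gamma> f =
     (\<Sum>t. \<gamma> ^ t * measure_pmf.expectation (traj P pol d0 t) (\<lambda>xs. f (fst (last xs)) (snd (last xs))))"

definition cost :: "'s \<Rightarrow> 's \<Rightarrow> 'a \<Rightarrow> real" where
  "cost s_tri s a = (if s = s_tri then 1 else 0)"

definition interv_set ::
  "'s \<Rightarrow> 's \<Rightarrow> ('s \<Rightarrow> 'a \<Rightarrow> real) \<Rightarrow> ('s \<Rightarrow> 'a pmf) \<Rightarrow> real \<Rightarrow> ('s \<times> 'a) set" where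
  "interv_set s_tri s_circ Qbar \<mu> \<eta> =
     {(s, a). s \<notin> {s_tri, s_circ} \<and>
              Qbar s a - measure_pmf.expectation (\<mu> s) (Qbar s) > \<eta>}"

text \<open>Shielded policy G(pi): pmf with mass pi(a|s) 1{(s,a) notin I} + w(s) mu(a|s).\<close>
definition shield :: "('s \<times> 'a) set \<Rightarrow> ('s \<Rightarrow> 'a pmf) \<Rightarrow> ('s \<Rightarrow> 'a pmf) \<Rightarrow> ('s \<Rightarrow> 'a pmf)" where
  "shield I \<mu> pol = (\<lambda>s. bind_pmf (pol s) (\<lambda>a. if (s, a) \<in> I then \<mu> s else return_pmf a))"

definition partial_set :: "('s \<times> 'a) set \<Rightarrow> bool" where
  "partial_set X \<longleftrightarrow> (\<forall>(s, a) \<in> X. \<exists>a'. (s, a') \<notin> X)"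

text \<open>Absorbing MDP: states 's option, None = s_dagger.\<close>
definition abs_P :: "('s \<Rightarrow> 'a \<Rightarrow> 's pmf) \<Rightarrow> ('s \<times> 'a) set \<Rightarrow> 's option \<Rightarrow> 'a \<Rightarrow> 's option pmf" where
  "abs_P P I x a = (case x of None \<Rightarrow> return_pmf None
     | Some s \<Rightarrow> (if (s, a) \<in> I then return_pmf None else map_pmf Some (P s a)))"

definition abs_r :: "('s \<Rightarrow> 'a \<Rightarrow> real) \<Rightarrow> ('s \<times> 'a) set \<Rightarrow> real \<Rightarrow> 's option \<Rightarrow> 'a \<Rightarrow> real" where
  "abs_r r I R x a = (case x of None \<Rightarrow> 0
     | Some s \<Rightarrow> (if (s, a) \<in> I then R else r s a))"

definition abs_value ::
  "('s \<Rightarrow> 'a \<Rightarrow> 's pmf) \<Rightarrow> ('s \<Rightarrow> 'a \<Rightarrow> real) \<Rightarrow> real \<Rightarrow> 's pmf \<Rightarrow> ('s \<times> 'a) set \<Rightarrow> real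
    \<Rightarrow> ('s option \<Rightarrow> 'a pmf) \<Rightarrow> real" where
  "abs_value P r \<gamma> d0 I R pol = disc_value (abs_P P I) pol (map_pmf Some d0) \<gamma> (abs_r r I R)"

text \<open>Extension of a policy on S to S + {s_dagger} (arbitrary choice at s_dagger).\<close>
definition ext_pol :: "('s \<Rightarrow> 'a pmf) \<Rightarrow> 's option \<Rightarrow> 'a pmf" where
  "ext_pol pol x = (case x of None \<Rightarrow> pol undefined | Some s \<Rightarrow> pol s)"

definition abs_opt ::
  "('s \<Rightarrow> 'a \<Rightarrow> 's pmf) \<Rightarrow> ('s \<Rightarrow> 'a \<Rightarrow> real) \<Rightarrow> real \<Rightarrow> 's pmf \<Rightarrow> ('s \<times> 'a) set \<Rightarrow> real \<Rightarrow> real" where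
  "abs_opt P r \<gamma> d0 I R = (SUP pol. abs_value P r \<gamma> d0 I R pol)"

definition eps_subopt ::
  "('s \<Rightarrow> 'a \<Rightarrow> 's pmf) \<Rightarrow> ('s \<Rightarrow> 'a \<Rightarrow> real) \<Rightarrow> real \<Rightarrow> 's pmf \<Rightarrow> ('s \<times> 'a) set \<Rightarrow> real
    \<Rightarrow> real \<Rightarrow> ('s \<Rightarrow> 'a pmf) \<Rightarrow> bool" where
  "eps_subopt P r \<gamma> d0 I R \<epsilon> pol \<longleftrightarrow>
     abs_opt P r \<gamma> d0 I R - abs_value P r \<gamma> d0 I R (ext_pol pol) \<le> \<epsilon>"

definition interv_prob ::
  "('s \<Rightarrow> 'a \<Rightarrow> 's pmf) \<Rightarrow> real \<Rightarrow> 's pmf \<Rightarrow> ('s \<times> 'a) set \<Rightarrow> ('s \<Rightarrow> 'a pmf) \<Rightarrow> real" where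
  "interv_prob P \<gamma> d0 I pol =
     (1 - \<gamma>) * (\<Sum>h. \<gamma> ^ h * measure_pmf.prob (traj P pol d0 h) {xs. \<exists>p \<in> set xs. p \<in> I})"

end

theory Submission
  imports Defs
begin

abbreviation EE :: "'b pmf \<Rightarrow> ('b \<Rightarrow> real) \<Rightarrow> real" where
  "EE M f \<equiv> measure_pmf.expectation M f"

lemma E_int:
  fixes f :: "'b \<Rightarrow> real"
  assumes "\<And>x. \<bar>f x\<bar> \<le> B"
  shows "integrable (measure_pmf M) f"
  by (rule measure_pmf.integrable_const_bound[where B=B]) (use assms in auto)

lemma E_bind:
  fixes f :: "'b \<Rightarrow> real"
  assumes "\<And>x. \<bar>f x\<bar> \<le> B"
  shows "EE (bind_pmf M N) f = EE M (\<lambda>x. EE (N x) f)"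
  unfolding measure_pmf_bind
  by (rule integral_bind[where K="count_space UNIV" and B=B and B'=1])
     (auto simp: assms measure_pmf.emeasure_space_1 space_subprob_algebra intro: prob_space_imp_subprob_space measure_pmf.prob_space_axioms)

lemma E_const[simp]: "EE M (\<lambda>_. c) = c"
  by simp

lemma E_cong: "(\<And>x. x \<in> set_pmf M \<Longrightarrow> f x = g x) \<Longrightarrow> EE M f = EE M g"
  by (rule integral_cong_AE) (auto intro: AE_pmfI)

lemma E_mono:
  fixes f g :: "'b \<Rightarrow> real"
  assumes "\<And>x. \<bar>f x\<bar> \<le> B" "\<And>x. \<bar>g x\<bar> \<le> B'" "\<And>x. x \<in> set_pmf M \<Longrightarrow> f x \<le> g x"
  shows "EE M f \<le> EE M g"
  by (rule integral_mono_AE) (auto intro: AE_pmfI E_int assms)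

lemma E_bound:
  fixes f :: "'b \<Rightarrow> real"
  assumes "\<And>x. \<bar>f x\<bar> \<le> B"
  shows "\<bar>EE M f\<bar> \<le> B"
proof -
  have "EE M f \<le> EE M (\<lambda>_. B)"
    by (rule E_mono[where B=B and B'="\<bar>B\<bar>"]) (use assms abs_le_D1 in auto)
  moreover have "EE M (\<lambda>_. -B) \<le> EE M f"
  proof (rule E_mono[where B="\<bar>B\<bar>" and B'=B])
    fix x show "- B \<le> f x" using assms[of x] by linarith
  qed (use assms in auto)
  ultimately show ?thesis by simp
qed

lemma E_add:
  fixes f g :: "'b \<Rightarrow> real"
  assumes "\<And>x. \<bar>f x\<bar> \<le> B" "\<And>x. \<bar>g x\<bar> \<le> B'"
  shows "EE M (\<lambda>x. f x + g x) = EE M f + EE M g"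
  by (rule Bochner_Integration.integral_add) (auto intro: E_int assms)

lemma E_diff:
  fixes f g :: "'b \<Rightarrow> real"
  assumes "\<And>x. \<bar>f x\<bar> \<le> B" "\<And>x. \<bar>g x\<bar> \<le> B'"
  shows "EE M (\<lambda>x. f x - g x) = EE M f - EE M g"
  by (rule Bochner_Integration.integral_diff) (auto intro: E_int assms)

lemma E_cmult: "EE M (\<lambda>x. c * f x) = c * EE M f"
  by simp

lemma T0:
  fixes F :: "('x \<times> 'a) list \<Rightarrow> real"
  assumes "\<And>xs. \<bar>F xs\<bar> \<le> B"
  shows "EE (traj P pol d0 0) F = EE d0 (\<lambda>s. EE (pol s) (\<lambda>a. F [(s,a)]))"
  by (simp add: E_bind[OF assms])

lemma T1:
  fixes F :: "('x \<times> 'a) list \<Rightarrow> real"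
  assumes "\<And>xs. \<bar>F xs\<bar> \<le> B"
  shows "EE (traj P pol d0 (Suc h)) F =
    EE (traj P pol d0 h) (\<lambda>xs. EE (P (fst (last xs)) (snd (last xs)))
        (\<lambda>s'. EE (pol s') (\<lambda>a'. F (xs @ [(s', a')]))))"
proof -
  have b1: "\<bar>EE (pol s') (\<lambda>a'. F (xs @ [(s', a')]))\<bar> \<le> B" for s' xs
    by (rule E_bound) (rule assms)
  have b2: "\<bar>EE (P s a) (\<lambda>s'. EE (pol s') (\<lambda>a'. F (xs @ [(s', a')])))\<bar> \<le> B" for s a xs
    by (rule E_bound) (rule b1)
  show ?thesis
    apply (simp only: traj.simps)
    apply (subst E_bind[where B=B], rule assms)
    apply (subst E_bind[where B=B], rule assms)
    apply (subst E_bind[where B=B], rule assms)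
    apply simp
    done
qed

lemma traj_len: "xs \<in> set_pmf (traj P pol d0 t) \<Longrightarrow> length xs = Suc t"
  by (induction t arbitrary: xs) auto

lemma traj_ne: "xs \<in> set_pmf (traj P pol d0 t) \<Longrightarrow> xs \<noteq> []"
  using traj_len by fastforce

lemma hit_split: "xs \<noteq> [] \<Longrightarrow> (\<exists>p\<in>set xs. p \<in> I) \<longleftrightarrow> (\<exists>p\<in>set (butlast xs). p \<in> I) \<or> last xs \<in> I"
  by (metis append_butlast_last_id butlast.simps(2) in_set_butlastD last_in_set
      list.distinct(1) rotate1.simps(2) set_ConsD set_rotate1)

lemma absA:
  fixes F :: "'s option \<Rightarrow> 'a \<Rightarrow> real"
  assumes bnd: "\<And>x a. \<bar>F x a\<bar> \<le> B" and none: "\<And>a. F None a = 0"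
  shows "EE (traj (abs_P P I) (ext_pol pol) (map_pmf Some d0) t) (\<lambda>xs. F (fst (last xs)) (snd (last xs)))
       = EE (traj P pol d0 t) (\<lambda>xs. if (\<exists>p\<in>set (butlast xs). p \<in> I) then 0 else F (Some (fst (last xs))) (snd (last xs)))"
  using bnd none
proof (induction t arbitrary: F B)
  case 0
  have B0: "0 \<le> B" using "0.prems"(1) by (meson abs_ge_zero order_trans)
  have bR: "\<bar>(if (\<exists>p\<in>set (butlast xs). p \<in> I) then 0 else F (Some (fst (last xs))) (snd (last xs)))\<bar> \<le> B" for xs
    using "0.prems"(1) B0 by auto
  show ?case
    apply (subst T0[where B=B], rule "0.prems"(1))
    apply (subst T0[OF bR])
    apply (simp add: ext_pol_def)
    done
next
  case (Suc t)
  have B0: "0 \<le> B" using Suc.prems(1) by (meson abs_ge_zero order_trans)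
  define g where "g s a = EE (P s a) (\<lambda>s'. EE (pol s') (\<lambda>a'. F (Some s') a'))" for s a
  define H where "H x a = (case x of None \<Rightarrow> 0 | Some s \<Rightarrow> if (s,a)\<in>I then 0 else g s a)" for x a
  have bg: "\<bar>g s a\<bar> \<le> B" for s a
    unfolding g_def by (rule E_bound, rule E_bound, rule Suc.prems(1))
  have bH: "\<bar>H x a\<bar> \<le> B" for x a
    using bg B0 by (auto simp: H_def split: option.splits)
  have Fn: "F None = (\<lambda>_. 0)" using Suc.prems(2) by auto
  have inner: "EE (abs_P P I x a) (\<lambda>s'. EE (ext_pol pol s') (\<lambda>a'. F s' a')) = H x a" for x a
    by (cases x) (auto simp: abs_P_def H_def g_def ext_pol_def Fn)
  have bR: "\<bar>(if (\<exists>p\<in>set (butlast xs). p \<in> I) then 0 else F (Some (fst (last xs))) (snd (last xs)))\<bar> \<le> B" for xs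
    using Suc.prems(1) B0 by auto
  have "EE (traj (abs_P P I) (ext_pol pol) (map_pmf Some d0) (Suc t)) (\<lambda>xs. F (fst (last xs)) (snd (last xs)))
      = EE (traj (abs_P P I) (ext_pol pol) (map_pmf Some d0) t) (\<lambda>xs. H (fst (last xs)) (snd (last xs)))"
    apply (subst T1[where B=B], rule Suc.prems(1))
    apply (simp add: inner)
    done
  also have "\<dots> = EE (traj P pol d0 t) (\<lambda>xs. if (\<exists>p\<in>set (butlast xs). p \<in> I) then 0 else H (Some (fst (last xs))) (snd (last xs)))"
    by (rule Suc.IH[where B=B]) (use bH in \<open>auto simp: H_def\<close>)
  also have "\<dots> = EE (traj P pol d0 (Suc t)) (\<lambda>xs. if (\<exists>p\<in>set (butlast xs). p \<in> I) then 0 else F (Some (fst (last xs))) (snd (last xs)))"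
  proof -
    have "EE (traj P pol d0 (Suc t)) (\<lambda>xs. if (\<exists>p\<in>set (butlast xs). p \<in> I) then 0 else F (Some (fst (last xs))) (snd (last xs)))
       = EE (traj P pol d0 t) (\<lambda>xs. if (\<exists>p\<in>set xs. p \<in> I) then 0 else g (fst (last xs)) (snd (last xs)))"
      apply (subst T1[OF bR])
      apply (rule E_cong)
      apply (auto simp: g_def)
      done
    also have "\<dots> = EE (traj P pol d0 t) (\<lambda>xs. if (\<exists>p\<in>set (butlast xs). p \<in> I) then 0 else H (Some (fst (last xs))) (snd (last xs)))"
    proof (rule E_cong)
      fix xs assume "xs \<in> set_pmf (traj P pol d0 t)"
      then have "xs \<noteq> []" by (rule traj_ne)
      from hit_split[OF this, of I] show "(if (\<exists>p\<in>set xs. p \<in> I) then 0 else g (fst (last xs)) (snd (last xs))) =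
          (if (\<exists>p\<in>set (butlast xs). p \<in> I) then 0 else H (Some (fst (last xs))) (snd (last xs)))"
        by (auto simp: H_def)
    qed
    finally show ?thesis by simp
  qed
  finally show ?case .
qed

lemma E_nonneg: "(\<And>x. 0 \<le> (f::_\<Rightarrow>real) x) \<Longrightarrow> 0 \<le> EE M f"
  by (rule integral_nonneg_AE) (auto intro: AE_pmfI)

lemma E_le: assumes "\<And>x. 0 \<le> (f::_\<Rightarrow>real) x" "\<And>x. f x \<le> B" shows "EE M f \<le> B"
proof -
  have "\<bar>EE M f\<bar> \<le> B" by (rule E_bound) (use assms in \<open>auto intro: order_trans\<close>)
  then show ?thesis by simp
qed

lemma domL:
  fixes f :: "'x \<Rightarrow> 'a \<Rightarrow> real"
  assumes C: "\<And>s (h::'a \<Rightarrow> real) B. (\<And>a. 0 \<le> h a) \<Longrightarrow> (\<And>a. h a \<le> B) \<Longrightarrow>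
        EE (pol s) (\<lambda>a. if (s,a)\<in>I then 0 else h a) \<le> EE (pol2 s) h"
  and f: "\<And>s a. 0 \<le> f s a" "\<And>s a. f s a \<le> B"
  shows "EE (traj P pol d0 t) (\<lambda>xs. if (\<exists>p\<in>set xs. p\<in>I) then 0 else f (fst (last xs)) (snd (last xs)))
     \<le> EE (traj P pol2 d0 t) (\<lambda>xs. f (fst (last xs)) (snd (last xs)))"
  using f
proof (induction t arbitrary: f B)
  case 0
  have B0: "0 \<le> B" using "0.prems" by (meson order_trans)
  have b1: "\<bar>(if (\<exists>p\<in>set xs. p\<in>I) then 0 else f (fst (last xs)) (snd (last xs)))\<bar> \<le> B" for xs
    using "0.prems" B0 by auto
  have b2: "\<bar>f (fst (last xs)) (snd (last xs))\<bar> \<le> B" for xs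
    using "0.prems" by (simp add: abs_le_iff)
  have bf: "\<bar>f s a\<bar> \<le> B" for s a using "0.prems"[of s a] by auto
  show ?case
    apply (subst T0[OF b1], subst T0[OF b2])
    apply (simp cong: if_cong)
    apply (rule E_mono[where B=B and B'=B])
      apply (rule E_bound) using bf B0 apply simp
     apply (rule E_bound) using bf apply simp
    apply (rule C[where B=B]) using "0.prems" apply auto
    done
next
  case (Suc t)
  have B0: "0 \<le> B" using Suc.prems by (meson order_trans)
  have bf: "\<bar>f s a\<bar> \<le> B" for s a using Suc.prems[of s a] by auto
  define g where "g s a = EE (P s a) (\<lambda>s'. EE (pol s') (\<lambda>a'. if (s',a')\<in>I then 0 else f s' a'))" for s a
  define g2 where "g2 s a = EE (P s a) (\<lambda>s'. EE (pol2 s') (\<lambda>a'. f s' a'))" for s a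
  have g2b: "0 \<le> g2 s a" "g2 s a \<le> B" for s a
    unfolding g2_def using Suc.prems by (auto intro!: E_nonneg E_le)
  have gb: "0 \<le> g s a" "g s a \<le> B" for s a
    unfolding g_def using Suc.prems B0 by (auto intro!: E_nonneg E_le)
  have gg2: "g s a \<le> g2 s a" for s a
    unfolding g_def g2_def
    apply (rule E_mono[where B=B and B'=B])
      apply (rule E_bound) using bf B0 apply simp
     apply (rule E_bound, rule bf)
    apply (rule C[where B=B]) using Suc.prems by auto
  have b1: "\<bar>(if (\<exists>p\<in>set xs. p\<in>I) then 0 else f (fst (last xs)) (snd (last xs)))\<bar> \<le> B" for xs
    using Suc.prems B0 by auto
  have b2: "\<bar>f (fst (last xs)) (snd (last xs))\<bar> \<le> B" for xs using bf by auto
  have "EE (traj P pol d0 (Suc t)) (\<lambda>xs. if (\<exists>p\<in>set xs. p\<in>I) then 0 else f (fst (last xs)) (snd (last xs)))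
      = EE (traj P pol d0 t) (\<lambda>xs. if (\<exists>p\<in>set xs. p\<in>I) then 0 else g (fst (last xs)) (snd (last xs)))"
    apply (subst T1[OF b1])
    apply (rule E_cong)
    apply (auto simp: g_def cong: if_cong)
    done
  also have "\<dots> \<le> EE (traj P pol d0 t) (\<lambda>xs. if (\<exists>p\<in>set xs. p\<in>I) then 0 else g2 (fst (last xs)) (snd (last xs)))"
    apply (rule E_mono[where B=B and B'=B])
    using gb g2b gg2 B0 by auto
  also have "\<dots> \<le> EE (traj P pol2 d0 t) (\<lambda>xs. g2 (fst (last xs)) (snd (last xs)))"
    by (rule Suc.IH[where B=B]) (use g2b in auto)
  also have "\<dots> = EE (traj P pol2 d0 (Suc t)) (\<lambda>xs. f (fst (last xs)) (snd (last xs)))"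
    by (subst T1[OF b2]) (simp add: g2_def)
  finally show ?case .
qed

lemma C_gen:
  fixes h :: "'a \<Rightarrow> real"
  assumes h: "\<And>a. 0 \<le> h a" "\<And>a. h a \<le> B" and nu: "\<And>a. 0 \<le> EE (\<nu> a) h"
  shows "EE M (\<lambda>a. if (s,a) \<in> J then 0 else h a) \<le> EE (bind_pmf M (\<lambda>a. if (s,a) \<in> J then \<nu> a else return_pmf a)) h"
proof -
  have B0: "0 \<le> B" using h by (meson order_trans)
  have bh: "\<bar>h a\<bar> \<le> B" for a using h[of a] by auto
  show ?thesis
    apply (subst E_bind[OF bh])
    apply (rule E_mono[where B=B and B'=B])
      apply (use h B0 in auto)[1]
     apply (rule E_bound, rule bh)
    using nu by auto
qed

lemma traj_nohit:
  assumes "\<And>s a. a \<in> set_pmf (pol s) \<Longrightarrow> (s,a) \<notin> I"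
  shows "xs \<in> set_pmf (traj P pol d0 t) \<Longrightarrow> \<not>(\<exists>p\<in>set xs. p\<in>I)"
  using assms by (induction t arbitrary: xs) fastforce+

lemma summ:
  fixes x :: "nat \<Rightarrow> real"
  assumes "0 \<le> \<gamma>" "\<gamma> < 1" "\<And>t. \<bar>x t\<bar> \<le> B"
  shows "summable (\<lambda>t. \<gamma>^t * x t)"
proof (rule summable_comparison_test'[where g="\<lambda>t. B * \<gamma>^t" and N=0])
  show "summable (\<lambda>t. B * \<gamma>^t)" using assms by (intro summable_mult summable_geometric) auto
  fix n show "norm (\<gamma>^n * x n) \<le> B * \<gamma>^n"
    using assms(1) assms(3)[of n] by (simp add: abs_mult mult.commute mult_right_mono)
qed

lemma shift:
  fixes x :: "nat \<Rightarrow> real"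
  assumes "summable (\<lambda>t. \<gamma>^t * x t)"
  shows "(\<Sum>t. \<gamma>^(Suc t) * x (Suc t)) = (\<Sum>t. \<gamma>^t * x t) - x 0"
  using suminf_split_head[OF assms] by simp

lemma disc_le:
  assumes "0 \<le> \<gamma>" "\<gamma> < 1" "\<And>x a. \<bar>f x a\<bar> \<le> B"
  shows "disc_value P pol d0 \<gamma> f \<le> B / (1 - \<gamma>)"
proof -
  have b: "\<bar>EE (traj P pol d0 t) (\<lambda>xs. f (fst (last xs)) (snd (last xs)))\<bar> \<le> B" for t
    by (rule E_bound) (rule assms(3))
  have "disc_value P pol d0 \<gamma> f \<le> (\<Sum>t. \<gamma>^t * B)"
    unfolding disc_value_def
  proof (rule suminf_le)
    fix t show "\<gamma> ^ t * EE (traj P pol d0 t) (\<lambda>xs. f (fst (last xs)) (snd (last xs))) \<le> \<gamma>^t * B"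
      using b[of t] assms(1) by (intro mult_left_mono) auto
    show "summable (\<lambda>t. \<gamma> ^ t * EE (traj P pol d0 t) (\<lambda>xs. f (fst (last xs)) (snd (last xs))))"
      by (rule summ[OF assms(1,2) b])
    show "summable (\<lambda>t. \<gamma>^t * B)" using summ[OF assms(1,2), of "\<lambda>_. B" "\<bar>B\<bar>"] by simp
  qed
  also have "\<dots> = (\<Sum>t. \<gamma>^t) * B"
    by (rule suminf_mult2[symmetric]) (rule summable_geometric, use assms(1,2) in auto)
  also have "\<dots> = B / (1 - \<gamma>)"
    using assms(1,2) suminf_geometric[of \<gamma>] by simp
  finally show ?thesis .
qed

lemma prob_eq: "measure_pmf.prob M A = EE M (\<lambda>x. if x \<in> A then 1 else 0)"
proof -
  have "indicator A = (\<lambda>x. if x \<in> A then 1 else (0::real))" by (auto simp: indicator_def)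
  moreover have "EE M (indicator A) = measure_pmf.prob M A" by simp
  ultimately show ?thesis by simp
qed

lemma absV:
  fixes r :: "'s \<Rightarrow> 'a \<Rightarrow> real"
  assumes rb: "\<And>s a. 0 \<le> r s a \<and> r s a \<le> 1" and Rn: "R < 0"
  shows "abs_value P r \<gamma> d0 I R (ext_pol \<rho>) = (\<Sum>t. \<gamma>^t * EE (traj P \<rho> d0 t)
     (\<lambda>xs. if (\<exists>p\<in>set (butlast xs). p\<in>I) then 0 else (if last xs \<in> I then R else r (fst (last xs)) (snd (last xs)))))"
  unfolding abs_value_def disc_value_def
proof (rule suminf_cong)
  fix t
  have b: "\<bar>abs_r r I R x a\<bar> \<le> 1 - R" for x a
    using rb Rn by (auto simp: abs_r_def split: option.splits) (smt (verit))+
  show "\<gamma> ^ t * EE (traj (abs_P P I) (ext_pol \<rho>) (map_pmf Some d0) t) (\<lambda>xs. abs_r r I R (fst (last xs)) (snd (last xs))) =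
    \<gamma> ^ t * EE (traj P \<rho> d0 t) (\<lambda>xs. if (\<exists>p\<in>set (butlast xs). p\<in>I) then 0 else (if last xs \<in> I then R else r (fst (last xs)) (snd (last xs))))"
    by (subst absA[where B="1 - R"]) (use b in \<open>auto simp: abs_r_def cong: if_cong\<close>)
qed

lemma abs_bdd:
  assumes "0 \<le> \<gamma>" "\<gamma> < 1" and rb: "\<And>s a. 0 \<le> r s a \<and> r s a \<le> 1" and Rn: "R < 0"
  shows "abs_value P r \<gamma> d0 I R \<rho> \<le> abs_opt P r \<gamma> d0 I R"
proof -
  have b: "\<bar>abs_r r I R x a\<bar> \<le> 1 - R" for x a
    using rb Rn by (auto simp: abs_r_def split: option.splits) (smt (verit))+
  have "bdd_above (range (abs_value P r \<gamma> d0 I R))"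
    unfolding abs_value_def
    by (rule bdd_aboveI2, rule disc_le[OF assms(1,2)], rule b)
  then show ?thesis unfolding abs_opt_def by (rule cSUP_upper[OF UNIV_I])
qed

definition "Ast P \<rho> d0 I R r t = EE (traj P \<rho> d0 t) (\<lambda>xs. if (\<exists>p\<in>set (butlast xs). p\<in>I) then 0 else (if last xs \<in> I then R else r (fst (last xs)) (snd (last xs))))"
definition "Ost P \<rho> d0 r t = EE (traj P \<rho> d0 t) (\<lambda>xs. r (fst (last xs)) (snd (last xs)))"
definition "Kst P \<rho> d0 I r t = EE (traj P \<rho> d0 t) (\<lambda>xs. if (\<exists>p\<in>set xs. p\<in>I) then 0 else r (fst (last xs)) (snd (last xs)))"
definition "Dst P \<rho> d0 I t = EE (traj P \<rho> d0 t) (\<lambda>xs. if \<not>(\<exists>p\<in>set (butlast xs). p\<in>I) \<and> last xs \<in> I then 1 else 0)"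
definition "Qst P \<rho> d0 I t = EE (traj P \<rho> d0 t) (\<lambda>xs. if (\<exists>p\<in>set xs. p\<in>I) then 1 else 0)"
definition "Hst P \<rho> d0 I t = EE (traj P \<rho> d0 t) (\<lambda>xs. if (\<exists>p\<in>set (butlast xs). p\<in>I) then 1 else 0)"

context
  fixes r :: "'s \<Rightarrow> 'a \<Rightarrow> real" and R :: real
  assumes rb: "\<And>s a. 0 \<le> r s a \<and> r s a \<le> 1" and Rn: "R < 0"
begin

lemma bA: "\<bar>Ast P \<rho> d0 I R r t\<bar> \<le> 1 - R"
  unfolding Ast_def by (rule E_bound) (use rb Rn in \<open>auto simp: abs_le_iff\<close>; smt (verit) rb)
lemma bO: "\<bar>Ost P \<rho> d0 r t\<bar> \<le> 1"
  unfolding Ost_def by (rule E_bound) (use rb in \<open>auto simp: abs_le_iff\<close>; smt (verit) rb)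
lemma bK: "\<bar>Kst P \<rho> d0 I r t\<bar> \<le> 1"
  unfolding Kst_def by (rule E_bound) (use rb in \<open>auto simp: abs_le_iff\<close>; smt (verit) rb)
lemma bD: "\<bar>Dst P \<rho> d0 I t\<bar> \<le> 1"
  unfolding Dst_def by (rule E_bound) auto
lemma bQ: "\<bar>Qst P \<rho> d0 I t\<bar> \<le> 1"
  unfolding Qst_def by (rule E_bound) auto
lemma bH: "\<bar>Hst P \<rho> d0 I t\<bar> \<le> 1"
  unfolding Hst_def by (rule E_bound) auto

lemma AO: "Ast P \<rho> d0 I R r t \<le> Ost P \<rho> d0 r t"
  unfolding Ast_def Ost_def
  by (rule E_mono[where B="1 - R" and B'=1]) (use rb Rn in \<open>auto simp: abs_le_iff; smt (verit) rb\<close>)+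

lemma AK: "Ast P \<rho> d0 I R r t = Kst P \<rho> d0 I r t + R * Dst P \<rho> d0 I t"
proof -
  have "Ast P \<rho> d0 I R r t = EE (traj P \<rho> d0 t) (\<lambda>xs. (if (\<exists>p\<in>set xs. p\<in>I) then 0 else r (fst (last xs)) (snd (last xs)))
        + R * (if \<not>(\<exists>p\<in>set (butlast xs). p\<in>I) \<and> last xs \<in> I then 1 else 0))"
    unfolding Ast_def
  proof (rule E_cong)
    fix xs assume "xs \<in> set_pmf (traj P \<rho> d0 t)"
    then have "xs \<noteq> []" by (rule traj_ne)
    from hit_split[OF this, of I] show "(if (\<exists>p\<in>set (butlast xs). p\<in>I) then 0 else (if last xs \<in> I then R else r (fst (last xs)) (snd (last xs)))) =
      (if (\<exists>p\<in>set xs. p\<in>I) then 0 else r (fst (last xs)) (snd (last xs))) + R * (if \<not>(\<exists>p\<in>set (butlast xs). p\<in>I) \<and> last xs \<in> I then 1 else 0)"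
      by auto
  qed
  also have "\<dots> = Kst P \<rho> d0 I r t + R * Dst P \<rho> d0 I t"
    unfolding Kst_def Dst_def
    by (subst E_add[where B=1 and B'="\<bar>R\<bar>"]) (use rb in \<open>auto simp: abs_le_iff; smt (verit) rb\<close>)+
  finally show ?thesis .
qed

lemma OA: "Ost P \<rho> d0 r t - Ast P \<rho> d0 I R r t \<le> Qst P \<rho> d0 I t + \<bar>R\<bar> * Dst P \<rho> d0 I t"
proof -
  have "Ost P \<rho> d0 r t - Ast P \<rho> d0 I R r t = EE (traj P \<rho> d0 t) (\<lambda>xs. r (fst (last xs)) (snd (last xs)) -
     (if (\<exists>p\<in>set (butlast xs). p\<in>I) then 0 else (if last xs \<in> I then R else r (fst (last xs)) (snd (last xs)))))"
    unfolding Ost_def Ast_def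
    by (subst E_diff[where B=1 and B'="1 - R"]) (use rb Rn in \<open>auto simp: abs_le_iff; smt (verit) rb\<close>)+
  also have "\<dots> \<le> EE (traj P \<rho> d0 t) (\<lambda>xs. (if (\<exists>p\<in>set xs. p\<in>I) then 1 else 0)
        + \<bar>R\<bar> * (if \<not>(\<exists>p\<in>set (butlast xs). p\<in>I) \<and> last xs \<in> I then 1 else 0))"
  proof (rule E_mono[where B="2 - R" and B'="1 - R"])
    fix xs assume "xs \<in> set_pmf (traj P \<rho> d0 t)"
    then have "xs \<noteq> []" by (rule traj_ne)
    from hit_split[OF this, of I] rb[of "fst (last xs)" "snd (last xs)"] Rn
    show "r (fst (last xs)) (snd (last xs)) -
     (if (\<exists>p\<in>set (butlast xs). p\<in>I) then 0 else (if last xs \<in> I then R else r (fst (last xs)) (snd (last xs))))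
      \<le> (if (\<exists>p\<in>set xs. p\<in>I) then 1 else 0) + \<bar>R\<bar> * (if \<not>(\<exists>p\<in>set (butlast xs). p\<in>I) \<and> last xs \<in> I then 1 else 0)"
      by auto
  next
    fix xs show "\<bar>(if (\<exists>p\<in>set xs. p\<in>I) then 1 else 0)
        + \<bar>R\<bar> * (if \<not>(\<exists>p\<in>set (butlast xs). p\<in>I) \<and> last xs \<in> I then 1 else 0)\<bar> \<le> 1 - R"
      using Rn by (cases "\<exists>p\<in>set xs. p\<in>I"; cases "\<not>(\<exists>p\<in>set (butlast xs). p\<in>I) \<and> last xs \<in> I") auto
  qed (use rb Rn in \<open>auto simp: abs_le_iff; smt (verit) rb\<close>)
  also have "\<dots> = Qst P \<rho> d0 I t + \<bar>R\<bar> * Dst P \<rho> d0 I t"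
    unfolding Qst_def Dst_def
    by (subst E_add[where B=1 and B'="\<bar>R\<bar>"]) auto
  finally show ?thesis .
qed

end

lemma QD: "Qst P \<rho> d0 I t = Hst P \<rho> d0 I t + Dst P \<rho> d0 I t"
proof -
  have "Qst P \<rho> d0 I t = EE (traj P \<rho> d0 t) (\<lambda>xs. (if (\<exists>p\<in>set (butlast xs). p\<in>I) then 1 else 0)
        + (if \<not>(\<exists>p\<in>set (butlast xs). p\<in>I) \<and> last xs \<in> I then 1 else 0))"
    unfolding Qst_def
  proof (rule E_cong)
    fix xs assume "xs \<in> set_pmf (traj P \<rho> d0 t)"
    then have "xs \<noteq> []" by (rule traj_ne)
    from hit_split[OF this, of I] show "(if (\<exists>p\<in>set xs. p\<in>I) then 1 else 0) = (if (\<exists>p\<in>set (butlast xs). p\<in>I) then 1 else 0)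
        + (if \<not>(\<exists>p\<in>set (butlast xs). p\<in>I) \<and> last xs \<in> I then (1::real) else 0)"
      by auto
  qed
  also have "\<dots> = Hst P \<rho> d0 I t + Dst P \<rho> d0 I t"
    unfolding Hst_def Dst_def by (subst E_add[where B=1 and B'=1]) auto
  finally show ?thesis .
qed

lemma H0: "Hst P \<rho> d0 I 0 = 0"
  unfolding Hst_def by (subst T0[where B=1]) auto

lemma HS: "Hst P \<rho> d0 I (Suc t) = Qst P \<rho> d0 I t"
  unfolding Hst_def Qst_def by (subst T1[where B=1]) (auto cong: if_cong)

lemma part1:
  fixes r :: "'s \<Rightarrow> 'a \<Rightarrow> real"
  assumes gamma: "0 \<le> \<gamma>" "\<gamma> < 1" and rb: "\<And>s a. 0 \<le> r s a \<and> r s a \<le> 1" and Rn: "R < 0"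
    and subopt: "eps_subopt P r \<gamma> d0 I R \<epsilon> pol"
  shows "disc_value P pol_star d0 \<gamma> r - disc_value P pol d0 \<gamma> r
      \<le> (\<bar>R\<bar> + 1 / (1 - \<gamma>)) * interv_prob P \<gamma> d0 I pol_star + \<epsilon>"
proof -
  have VO: "disc_value P \<rho> d0 \<gamma> r = (\<Sum>t. \<gamma>^t * Ost P \<rho> d0 r t)" for \<rho>
    by (simp add: disc_value_def Ost_def)
  have VA: "abs_value P r \<gamma> d0 I R (ext_pol \<rho>) = (\<Sum>t. \<gamma>^t * Ast P \<rho> d0 I R r t)" for \<rho>
    by (simp add: absV[OF rb Rn] Ast_def)
  have sO: "\<And>\<rho>. summable (\<lambda>t. \<gamma>^t * Ost P \<rho> d0 r t)" by (rule summ[OF gamma bO[OF rb Rn]])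
  have sA: "\<And>\<rho>. summable (\<lambda>t. \<gamma>^t * Ast P \<rho> d0 I R r t)" by (rule summ[OF gamma bA[OF rb Rn]])
  have sQ: "\<And>\<rho>. summable (\<lambda>t. \<gamma>^t * Qst P \<rho> d0 I t)" by (rule summ[OF gamma bQ[OF rb Rn]])
  have sD: "\<And>\<rho>. summable (\<lambda>t. \<gamma>^t * Dst P \<rho> d0 I t)" by (rule summ[OF gamma bD[OF rb Rn]])
  have sH: "\<And>\<rho>. summable (\<lambda>t. \<gamma>^t * Hst P \<rho> d0 I t)" by (rule summ[OF gamma bH[OF rb Rn]])
  define QQ where "QQ = (\<Sum>t. \<gamma>^t * Qst P pol_star d0 I t)"
  have IP: "interv_prob P \<gamma> d0 I pol_star = (1 - \<gamma>) * QQ"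
    by (simp add: interv_prob_def prob_eq Qst_def QQ_def)
  have HH: "(\<Sum>t. \<gamma>^t * Hst P pol_star d0 I t) = \<gamma> * QQ"
  proof -
    have "(\<Sum>t. \<gamma>^t * Hst P pol_star d0 I t) = (\<Sum>t. \<gamma>^(Suc t) * Hst P pol_star d0 I (Suc t))"
    proof -
      have sH': "summable (\<lambda>t. \<gamma>^t * Hst P pol_star d0 I t)" by (rule sH)
      show ?thesis using shift[OF sH'] by (simp add: H0)
    qed
    also have "\<dots> = (\<Sum>t. \<gamma> * (\<gamma>^t * Qst P pol_star d0 I t))"
      by (simp add: HS mult.assoc)
    also have "\<dots> = \<gamma> * QQ" unfolding QQ_def by (rule suminf_mult[OF sQ])
    finally show ?thesis .
  qed
  have DD: "(\<Sum>t. \<gamma>^t * Dst P pol_star d0 I t) = (1 - \<gamma>) * QQ"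
  proof -
    have "(\<Sum>t. \<gamma>^t * Dst P pol_star d0 I t) = (\<Sum>t. \<gamma>^t * Qst P pol_star d0 I t - \<gamma>^t * Hst P pol_star d0 I t)"
      by (simp add: QD algebra_simps)
    also have "\<dots> = QQ - \<gamma> * QQ"
    proof -
      have sQs: "summable (\<lambda>t. \<gamma>^t * Qst P pol_star d0 I t)" by (rule sQ)
      have sHs: "summable (\<lambda>t. \<gamma>^t * Hst P pol_star d0 I t)" by (rule sH)
      show ?thesis using suminf_diff[OF sQs sHs] HH unfolding QQ_def by simp
    qed
    finally show ?thesis by (simp add: algebra_simps)
  qed
  have diff: "(\<Sum>t. \<gamma>^t * Ost P pol_star d0 r t) - (\<Sum>t. \<gamma>^t * Ast P pol_star d0 I R r t)
      \<le> QQ + \<bar>R\<bar> * (\<Sum>t. \<gamma>^t * Dst P pol_star d0 I t)"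
  proof -
    have "(\<Sum>t. \<gamma>^t * Ost P pol_star d0 r t) - (\<Sum>t. \<gamma>^t * Ast P pol_star d0 I R r t)
       = (\<Sum>t. \<gamma>^t * Ost P pol_star d0 r t - \<gamma>^t * Ast P pol_star d0 I R r t)"
      by (rule suminf_diff[OF sO sA])
    also have "\<dots> \<le> (\<Sum>t. \<gamma>^t * Qst P pol_star d0 I t + \<bar>R\<bar> * (\<gamma>^t * Dst P pol_star d0 I t))"
    proof (rule suminf_le)
      fix t
      have "\<gamma>^t * (Ost P pol_star d0 r t - Ast P pol_star d0 I R r t) \<le> \<gamma>^t * (Qst P pol_star d0 I t + \<bar>R\<bar> * Dst P pol_star d0 I t)"
        using OA[OF rb Rn] gamma by (intro mult_left_mono) auto
      then show "\<gamma>^t * Ost P pol_star d0 r t - \<gamma>^t * Ast P pol_star d0 I R r t \<le> \<gamma>^t * Qst P pol_star d0 I t + \<bar>R\<bar> * (\<gamma>^t * Dst P pol_star d0 I t)"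
        by (simp add: algebra_simps)
      show "summable (\<lambda>t. \<gamma>^t * Ost P pol_star d0 r t - \<gamma>^t * Ast P pol_star d0 I R r t)"
        by (rule summable_diff[OF sO sA])
      show "summable (\<lambda>t. \<gamma>^t * Qst P pol_star d0 I t + \<bar>R\<bar> * (\<gamma>^t * Dst P pol_star d0 I t))"
        by (rule summable_add[OF sQ summable_mult[OF sD]])
    qed
    also have "\<dots> = QQ + \<bar>R\<bar> * (\<Sum>t. \<gamma>^t * Dst P pol_star d0 I t)"
      unfolding QQ_def by (subst suminf_add[OF sQ summable_mult[OF sD], symmetric]) (simp add: suminf_mult[OF sD])
    finally show ?thesis .
  qed
  have piAO: "(\<Sum>t. \<gamma>^t * Ast P pol d0 I R r t) \<le> (\<Sum>t. \<gamma>^t * Ost P pol d0 r t)"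
  proof (rule suminf_le[OF _ sA sO])
    fix n show "\<gamma> ^ n * Ast P pol d0 I R r n \<le> \<gamma> ^ n * Ost P pol d0 r n"
      by (rule mult_left_mono[OF AO[OF rb Rn]]) (use gamma in simp)
  qed
  have opt1: "abs_value P r \<gamma> d0 I R (ext_pol pol_star) \<le> abs_opt P r \<gamma> d0 I R"
    by (rule abs_bdd[OF gamma rb Rn])
  have eps: "abs_opt P r \<gamma> d0 I R - abs_value P r \<gamma> d0 I R (ext_pol pol) \<le> \<epsilon>"
    using subopt unfolding eps_subopt_def .
  have "disc_value P pol_star d0 \<gamma> r - disc_value P pol d0 \<gamma> r \<le> QQ + \<bar>R\<bar> * ((1 - \<gamma>) * QQ) + \<epsilon>"
    using diff piAO opt1 eps unfolding VO VA DD by linarith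
  also have "QQ + \<bar>R\<bar> * ((1 - \<gamma>) * QQ) = (\<bar>R\<bar> + 1 / (1 - \<gamma>)) * ((1 - \<gamma>) * QQ)"
    using gamma by (simp add: field_simps)
  finally show ?thesis unfolding IP .
qed



lemma eps_bound:
  fixes r :: "'s \<Rightarrow> 'a \<Rightarrow> real"
  assumes gamma: "0 \<le> \<gamma>" "\<gamma> < 1" and rb: "\<And>s a. 0 \<le> r s a \<and> r s a \<le> 1" and Rn: "R < 0"
    and partial: "partial_set I"
    and subopt: "eps_subopt P r \<gamma> d0 I R \<epsilon> pol"
  shows "(\<Sum>t. \<gamma>^t * Dst P pol d0 I t) \<le> \<epsilon> / \<bar>R\<bar>"
proof -
  define fixp where "fixp = (\<lambda>s. bind_pmf (pol s) (\<lambda>a. if (s,a)\<in>I then return_pmf (SOME a'. (s,a')\<notin>I) else return_pmf a))"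
  have nohit: "(s,a) \<notin> I" if "a \<in> set_pmf (fixp s)" for s a
  proof -
    from that obtain a0 where a0: "a0 \<in> set_pmf (pol s)"
      and a: "a \<in> set_pmf (if (s,a0)\<in>I then return_pmf (SOME a'. (s,a')\<notin>I) else return_pmf a0)"
      unfolding fixp_def by auto
    show ?thesis
    proof (cases "(s,a0)\<in>I")
      case True
      then have "\<exists>a'. (s,a')\<notin>I" using partial unfolding partial_set_def by blast
      then have "(s, SOME a'. (s,a')\<notin>I) \<notin> I" by (rule someI_ex)
      with a True show ?thesis by simp
    next
      case False with a show ?thesis by simp
    qed
  qed
  have sO: "\<And>\<rho>. summable (\<lambda>t. \<gamma>^t * Ost P \<rho> d0 r t)" by (rule summ[OF gamma bO[OF rb Rn]])
  have sK: "\<And>\<rho>. summable (\<lambda>t. \<gamma>^t * Kst P \<rho> d0 I r t)" by (rule summ[OF gamma bK[OF rb Rn]])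
  have sD: "\<And>\<rho>. summable (\<lambda>t. \<gamma>^t * Dst P \<rho> d0 I t)" by (rule summ[OF gamma bD[OF rb Rn]])
  have AOf: "Ast P fixp d0 I R r t = Ost P fixp d0 r t" for t
    unfolding Ast_def Ost_def
  proof (rule E_cong)
    fix xs assume xs: "xs \<in> set_pmf (traj P fixp d0 t)"
    then have ne: "xs \<noteq> []" by (rule traj_ne)
    have nh: "\<not>(\<exists>p\<in>set xs. p\<in>I)" by (rule traj_nohit[OF _ xs]) (use nohit in auto)
    then have "\<not>(\<exists>p\<in>set (butlast xs). p\<in>I)" "last xs \<notin> I"
      using ne by (auto dest: in_set_butlastD)
    then show "(if (\<exists>p\<in>set (butlast xs). p\<in>I) then 0 else (if last xs \<in> I then R else r (fst (last xs)) (snd (last xs))))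
        = r (fst (last xs)) (snd (last xs))" by simp
  qed
  have KO: "Kst P pol d0 I r t \<le> Ost P fixp d0 r t" for t
    unfolding Kst_def Ost_def
  proof (rule domL[where B=1])
    fix s and h :: "'a \<Rightarrow> real" and B assume h: "\<And>a. 0 \<le> h a" "\<And>a. h a \<le> B"
    show "EE (pol s) (\<lambda>a. if (s, a) \<in> I then 0 else h a) \<le> EE (fixp s) h"
      unfolding fixp_def by (rule C_gen[OF h]) (simp add: h)
  qed (use rb in auto)
  have Vhat: "(\<Sum>t. \<gamma>^t * Kst P pol d0 I r t) \<le> abs_opt P r \<gamma> d0 I R"
  proof -
    have "(\<Sum>t. \<gamma>^t * Kst P pol d0 I r t) \<le> (\<Sum>t. \<gamma>^t * Ost P fixp d0 r t)"
    proof (rule suminf_le[OF _ sK sO])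
      fix n show "\<gamma> ^ n * Kst P pol d0 I r n \<le> \<gamma> ^ n * Ost P fixp d0 r n"
        by (rule mult_left_mono[OF KO]) (use gamma in simp)
    qed
    also have "\<dots> = abs_value P r \<gamma> d0 I R (ext_pol fixp)"
      by (simp add: absV[OF rb Rn] Ast_def[symmetric] AOf)
    also have "\<dots> \<le> abs_opt P r \<gamma> d0 I R" by (rule abs_bdd[OF gamma rb Rn])
    finally show ?thesis .
  qed
  have Vpi: "abs_value P r \<gamma> d0 I R (ext_pol pol) = (\<Sum>t. \<gamma>^t * Kst P pol d0 I r t) + R * (\<Sum>t. \<gamma>^t * Dst P pol d0 I t)"
  proof -
    have "abs_value P r \<gamma> d0 I R (ext_pol pol) = (\<Sum>t. \<gamma>^t * Kst P pol d0 I r t + R * (\<gamma>^t * Dst P pol d0 I t))"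
      by (simp add: absV[OF rb Rn] Ast_def[symmetric] AK[OF rb Rn] algebra_simps)
    also have "\<dots> = (\<Sum>t. \<gamma>^t * Kst P pol d0 I r t) + (\<Sum>t. R * (\<gamma>^t * Dst P pol d0 I t))"
      by (rule suminf_add[OF sK summable_mult[OF sD], symmetric])
    also have "\<dots> = (\<Sum>t. \<gamma>^t * Kst P pol d0 I r t) + R * (\<Sum>t. \<gamma>^t * Dst P pol d0 I t)"
      by (simp add: suminf_mult[OF sD])
    finally show ?thesis .
  qed
  have eps: "abs_opt P r \<gamma> d0 I R - abs_value P r \<gamma> d0 I R (ext_pol pol) \<le> \<epsilon>"
    using subopt unfolding eps_subopt_def .
  have "- R * (\<Sum>t. \<gamma>^t * Dst P pol d0 I t) \<le> \<epsilon>" using Vhat Vpi eps by linarith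
  then show ?thesis using Rn by (simp add: field_simps)
qed


lemma cost_step:
  assumes tri_step: "\<And>a. P s_tri a = return_pmf s_circ"
    and circ_abs: "\<And>a. P s_circ a = return_pmf s_circ"
  shows "EE (P s a) (\<lambda>s'. EE (pol s') (\<lambda>a'. if c \<and> s' \<noteq> s_circ then 1 else 0))
     \<le> (if c \<and> s \<noteq> s_tri \<and> s \<noteq> s_circ then (1::real) else 0)"
proof (cases "c \<and> s \<noteq> s_tri \<and> s \<noteq> s_circ")
  case True
  then show ?thesis by (simp, intro E_le) auto
next
  case False
  then have "\<not>c \<or> s = s_tri \<or> s = s_circ" by blast
  then show ?thesis
  proof (elim disjE)
    assume "\<not>c" then show ?thesis by simp
  next
    assume "s = s_tri" then show ?thesis using False by (simp add: tri_step)
  next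
    assume "s = s_circ" then show ?thesis using False by (simp add: circ_abs)
  qed
qed

lemma cost_part:
  fixes P :: "'s \<Rightarrow> 'a \<Rightarrow> 's pmf" and pol :: "'s \<Rightarrow> 'a pmf"
  assumes gamma: "0 \<le> \<gamma>" "\<gamma> < 1"
    and distinct: "s_tri \<noteq> s_circ"
    and tri_step: "\<And>a. P s_tri a = return_pmf s_circ"
    and circ_abs: "\<And>a. P s_circ a = return_pmf s_circ"
    and Isafe: "\<And>s a. (s,a) \<in> I \<Longrightarrow> s \<noteq> s_tri \<and> s \<noteq> s_circ"
  shows "disc_value P pol d0 \<gamma> (cost s_tri)
     \<le> disc_value P (shield I \<mu> pol) d0 \<gamma> (cost s_tri) + (\<Sum>t. \<gamma>^t * Dst P pol d0 I t)"
proof -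
  define tr where "tr t = traj P pol d0 t" for t
  define CK where "CK t = EE (tr t) (\<lambda>xs. if (\<exists>p\<in>set xs. p\<in>I) then 0 else cost s_tri (fst (last xs)) (snd (last xs)))" for t
  define CH where "CH t = EE (tr t) (\<lambda>xs. if (\<exists>p\<in>set xs. p\<in>I) \<and> fst (last xs) = s_tri then 1 else 0)" for t
  define W where "W t = EE (tr t) (\<lambda>xs. if (\<exists>p\<in>set xs. p\<in>I) \<and> fst (last xs) \<noteq> s_tri \<and> fst (last xs) \<noteq> s_circ then 1 else 0)" for t
  define E' where "E' t = EE (traj P (shield I \<mu> pol) d0 t) (\<lambda>xs. cost s_tri (fst (last xs)) (snd (last xs)))" for t
  define Dd where "Dd t = Dst P pol d0 I t" for t
  have cb: "\<bar>cost s_tri s a\<bar> \<le> 1" "0 \<le> cost s_tri s a" "cost s_tri s a \<le> 1" for s a by (auto simp: cost_def)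
  have bCK: "\<bar>CK t\<bar> \<le> 1" for t unfolding CK_def by (rule E_bound) (auto simp: cost_def)
  have bCH: "\<bar>CH t\<bar> \<le> 1" for t unfolding CH_def by (rule E_bound) auto
  have bW: "\<bar>W t\<bar> \<le> 1" for t unfolding W_def by (rule E_bound) auto
  have bE: "\<bar>E' t\<bar> \<le> 1" for t unfolding E'_def by (rule E_bound) (rule cb)
  have bD: "\<bar>Dd t\<bar> \<le> 1" for t unfolding Dd_def Dst_def by (rule E_bound) auto
  have W0: "0 \<le> W t" for t unfolding W_def by (rule E_nonneg) auto
  have sCK: "summable (\<lambda>t. \<gamma>^t * CK t)" by (rule summ[OF gamma bCK])
  have sCH: "summable (\<lambda>t. \<gamma>^t * CH t)" by (rule summ[OF gamma bCH])
  have sW: "summable (\<lambda>t. \<gamma>^t * W t)" by (rule summ[OF gamma bW])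
  have sE: "summable (\<lambda>t. \<gamma>^t * E' t)" by (rule summ[OF gamma bE])
  have sD: "summable (\<lambda>t. \<gamma>^t * Dd t)" by (rule summ[OF gamma bD])
  have split: "EE (tr t) (\<lambda>xs. cost s_tri (fst (last xs)) (snd (last xs))) = CK t + CH t" for t
  proof -
    have "EE (tr t) (\<lambda>xs. cost s_tri (fst (last xs)) (snd (last xs))) =
       EE (tr t) (\<lambda>xs. (if (\<exists>p\<in>set xs. p\<in>I) then 0 else cost s_tri (fst (last xs)) (snd (last xs)))
          + (if (\<exists>p\<in>set xs. p\<in>I) \<and> fst (last xs) = s_tri then 1 else 0))"
      by (rule E_cong) (auto simp: cost_def)
    also have "\<dots> = CK t + CH t" unfolding CK_def CH_def
      by (rule E_add[where B=1 and B'=1]) (auto simp: cost_def)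
    finally show ?thesis .
  qed
  have CKE: "CK t \<le> E' t" for t
    unfolding CK_def E'_def tr_def
  proof (rule domL[where B=1])
    fix s and h :: "'a \<Rightarrow> real" and B assume h: "\<And>a. 0 \<le> h a" "\<And>a. h a \<le> B"
    show "EE (pol s) (\<lambda>a. if (s, a) \<in> I then 0 else h a) \<le> EE (shield I \<mu> pol s) h"
      unfolding shield_def by (rule C_gen[OF h]) (simp add: h E_nonneg)
  qed (auto simp: cost_def)
  have CH0: "CH 0 = 0"
  proof -
    have nz: "\<not> ((s,a) \<in> I \<and> s = s_tri)" for s a using Isafe by blast
    show ?thesis unfolding CH_def tr_def by (subst T0[where B=1]) (auto simp: nz)
  qed
  have WD0: "W 0 = Dd 0"
  proof -
    have eq: "((s,a) \<in> I \<and> s \<noteq> s_tri \<and> s \<noteq> s_circ) = ((s,a) \<in> I)" for s a using Isafe by blast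
    show ?thesis unfolding W_def Dd_def Dst_def tr_def
      by (subst T0[where B=1], simp, subst T0[where B=1], simp) (simp add: eq)
  qed
  have F2: "CH (Suc t) + W (Suc t) \<le> W t + Dd (Suc t)" for t
  proof -
    have "CH (Suc t) + W (Suc t) = EE (tr (Suc t)) (\<lambda>xs. if (\<exists>p\<in>set xs. p\<in>I) \<and> fst (last xs) \<noteq> s_circ then 1 else 0)"
      unfolding CH_def W_def
      by (subst E_add[where B=1 and B'=1, symmetric]) (auto intro!: E_cong simp: distinct, metis distinct)
    also have "\<dots> \<le> EE (tr (Suc t)) (\<lambda>xs. (if (\<exists>p\<in>set (butlast xs). p\<in>I) \<and> fst (last xs) \<noteq> s_circ then 1 else 0)
        + (if \<not>(\<exists>p\<in>set (butlast xs). p\<in>I) \<and> last xs \<in> I then 1 else 0))"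
    proof (rule E_mono[where B=1 and B'=2])
      fix xs assume "xs \<in> set_pmf (tr (Suc t))"
      then have "xs \<noteq> []" unfolding tr_def by (rule traj_ne)
      from hit_split[OF this, of I] show "(if (\<exists>p\<in>set xs. p\<in>I) \<and> fst (last xs) \<noteq> s_circ then 1 else 0) \<le>
        (if (\<exists>p\<in>set (butlast xs). p\<in>I) \<and> fst (last xs) \<noteq> s_circ then 1 else 0)
        + (if \<not>(\<exists>p\<in>set (butlast xs). p\<in>I) \<and> last xs \<in> I then (1::real) else 0)"
        by auto
    qed auto
    also have "\<dots> = EE (tr (Suc t)) (\<lambda>xs. (if (\<exists>p\<in>set (butlast xs). p\<in>I) \<and> fst (last xs) \<noteq> s_circ then 1 else 0)) + Dd (Suc t)"
      unfolding Dd_def Dst_def tr_def by (rule E_add[where B=1 and B'=1]) auto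
    also have "EE (tr (Suc t)) (\<lambda>xs. (if (\<exists>p\<in>set (butlast xs). p\<in>I) \<and> fst (last xs) \<noteq> s_circ then 1 else 0))
        = EE (tr t) (\<lambda>xs. EE (P (fst (last xs)) (snd (last xs))) (\<lambda>s'. EE (pol s') (\<lambda>a'. if (\<exists>p\<in>set xs. p\<in>I) \<and> s' \<noteq> s_circ then 1 else 0)))"
      unfolding tr_def by (subst T1[where B=1]) (auto cong: if_cong)
    also have "\<dots> \<le> W t"
      unfolding W_def
    proof (rule E_mono[where B=1 and B'=1])
      fix xs
      show "EE (P (fst (last xs)) (snd (last xs))) (\<lambda>s'. EE (pol s') (\<lambda>a'. if (\<exists>p\<in>set xs. p\<in>I) \<and> s' \<noteq> s_circ then 1 else 0))
         \<le> (if (\<exists>p\<in>set xs. p\<in>I) \<and> fst (last xs) \<noteq> s_tri \<and> fst (last xs) \<noteq> s_circ then 1 else 0)"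
        by (rule cost_step[OF tri_step circ_abs])
      show "\<bar>EE (P (fst (last xs)) (snd (last xs))) (\<lambda>s'. EE (pol s') (\<lambda>a'. if (\<exists>p\<in>set xs. p\<in>I) \<and> s' \<noteq> s_circ then 1 else 0))\<bar> \<le> 1"
        by (intro E_bound) auto
      show "\<bar>(if (\<exists>p\<in>set xs. p\<in>I) \<and> fst (last xs) \<noteq> s_tri \<and> fst (last xs) \<noteq> s_circ then 1 else 0)\<bar> \<le> (1::real)"
        by auto
    qed
    finally show ?thesis by simp
  qed
  have CHD: "(\<Sum>t. \<gamma>^t * CH t) \<le> (\<Sum>t. \<gamma>^t * Dd t)"
  proof -
    have s1: "summable (\<lambda>t. \<gamma>^Suc t * CH (Suc t))" using sCH by (subst summable_Suc_iff)
    have s2: "summable (\<lambda>t. \<gamma>^Suc t * W (Suc t))" using sW by (subst summable_Suc_iff)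
    have s3: "summable (\<lambda>t. \<gamma>^Suc t * Dd (Suc t))" using sD by (subst summable_Suc_iff)
    have s4: "summable (\<lambda>t. \<gamma> * (\<gamma>^t * W t))" by (rule summable_mult[OF sW])
    have "(\<Sum>t. \<gamma>^Suc t * CH (Suc t) + \<gamma>^Suc t * W (Suc t)) \<le> (\<Sum>t. \<gamma> * (\<gamma>^t * W t) + \<gamma>^Suc t * Dd (Suc t))"
    proof (rule suminf_le)
      fix t show "\<gamma>^Suc t * CH (Suc t) + \<gamma>^Suc t * W (Suc t) \<le> \<gamma> * (\<gamma>^t * W t) + \<gamma>^Suc t * Dd (Suc t)"
        using mult_left_mono[OF F2[of t], of "\<gamma>^Suc t"] gamma by (simp add: algebra_simps)
    qed (intro summable_add s1 s2 s3 s4)+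
    then have "(\<Sum>t. \<gamma>^Suc t * CH (Suc t)) + (\<Sum>t. \<gamma>^Suc t * W (Suc t)) \<le> \<gamma> * (\<Sum>t. \<gamma>^t * W t) + (\<Sum>t. \<gamma>^Suc t * Dd (Suc t))"
      by (simp only: suminf_add[OF s1 s2] suminf_add[OF s4 s3] suminf_mult[OF sW, symmetric])
    moreover have "(\<Sum>t. \<gamma>^Suc t * CH (Suc t)) = (\<Sum>t. \<gamma>^t * CH t) - CH 0" by (rule shift[OF sCH])
    moreover have "(\<Sum>t. \<gamma>^Suc t * W (Suc t)) = (\<Sum>t. \<gamma>^t * W t) - W 0" by (rule shift[OF sW])
    moreover have "(\<Sum>t. \<gamma>^Suc t * Dd (Suc t)) = (\<Sum>t. \<gamma>^t * Dd t) - Dd 0" by (rule shift[OF sD])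
    ultimately have "(\<Sum>t. \<gamma>^t * CH t) - CH 0 + ((\<Sum>t. \<gamma>^t * W t) - W 0) \<le> \<gamma> * (\<Sum>t. \<gamma>^t * W t) + ((\<Sum>t. \<gamma>^t * Dd t) - Dd 0)"
      by simp
    moreover have "0 \<le> (\<Sum>t. \<gamma>^t * W t)" by (rule suminf_nonneg[OF sW]) (use W0 gamma in simp)
    then have "\<gamma> * (\<Sum>t. \<gamma>^t * W t) \<le> (\<Sum>t. \<gamma>^t * W t)"
      using gamma by (intro mult_left_le_one_le) auto
    ultimately show ?thesis using CH0 WD0 by linarith
  qed
  have "disc_value P pol d0 \<gamma> (cost s_tri) = (\<Sum>t. \<gamma>^t * CK t + \<gamma>^t * CH t)"
    unfolding disc_value_def by (simp add: tr_def[symmetric] split algebra_simps)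
  also have "\<dots> = (\<Sum>t. \<gamma>^t * CK t) + (\<Sum>t. \<gamma>^t * CH t)" by (rule suminf_add[OF sCK sCH, symmetric])
  also have "(\<Sum>t. \<gamma>^t * CK t) \<le> (\<Sum>t. \<gamma>^t * E' t)"
  proof (rule suminf_le[OF _ sCK sE])
    fix n show "\<gamma>^n * CK n \<le> \<gamma>^n * E' n" by (rule mult_left_mono[OF CKE]) (use gamma in simp)
  qed
  also have "(\<Sum>t. \<gamma>^t * E' t) = disc_value P (shield I \<mu> pol) d0 \<gamma> (cost s_tri)"
    unfolding disc_value_def E'_def ..
  finally show ?thesis using CHD unfolding Dd_def by simp
qed

theorem mainTheorem10:
  fixes P :: "'s \<Rightarrow> 'a \<Rightarrow> 's pmf" and r :: "'s \<Rightarrow> 'a \<Rightarrow> real"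
    and \<gamma> :: real and d0 :: "'s pmf" and s_tri s_circ :: 's
    and Qbar :: "'s \<Rightarrow> 'a \<Rightarrow> real" and \<mu> :: "'s \<Rightarrow> 'a pmf" and \<eta> :: real
    and R :: real and \<epsilon> :: real and pol pol_star :: "'s \<Rightarrow> 'a pmf"
  assumes gamma: "0 \<le> \<gamma>" "\<gamma> < 1"
    and r_bounds: "\<And>s a. 0 \<le> r s a \<and> r s a \<le> 1"
    and distinct: "s_tri \<noteq> s_circ"
    and tri_step: "\<And>a. P s_tri a = return_pmf s_circ"
    and circ_abs: "\<And>a. P s_circ a = return_pmf s_circ"
    and r_unsafe: "\<And>a. r s_tri a = 0" "\<And>a. r s_circ a = 0"
    and d0_circ: "pmf d0 s_circ = 0"
    and Qbar_bounds: "\<And>s a. s \<notin> {s_tri, s_circ} \<Longrightarrow> 0 \<le> Qbar s a \<and> Qbar s a \<le> 1"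
    and eta: "0 \<le> \<eta>" "\<eta> \<le> 1"
    and R_neg: "R < 0"
    and partial: "partial_set (interv_set s_tri s_circ Qbar \<mu> \<eta>)"
    and subopt: "eps_subopt P r \<gamma> d0 (interv_set s_tri s_circ Qbar \<mu> \<eta>) R \<epsilon> pol"
  shows "disc_value P pol_star d0 \<gamma> r - disc_value P pol d0 \<gamma> r
           \<le> (\<bar>R\<bar> + 1 / (1 - \<gamma>)) * interv_prob P \<gamma> d0 (interv_set s_tri s_circ Qbar \<mu> \<eta>) pol_star + \<epsilon>
       \<and> disc_value P pol d0 \<gamma> (cost s_tri)
           \<le> disc_value P (shield (interv_set s_tri s_circ Qbar \<mu> \<eta>) \<mu> pol) d0 \<gamma> (cost s_tri)
              + \<epsilon> / \<bar>R\<bar>"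
proof -
  let ?I = "interv_set s_tri s_circ Qbar \<mu> \<eta>"
  have Isafe: "\<And>s a. (s,a) \<in> ?I \<Longrightarrow> s \<noteq> s_tri \<and> s \<noteq> s_circ"
    by (auto simp: interv_set_def)
  have p1: "disc_value P pol_star d0 \<gamma> r - disc_value P pol d0 \<gamma> r
           \<le> (\<bar>R\<bar> + 1 / (1 - \<gamma>)) * interv_prob P \<gamma> d0 ?I pol_star + \<epsilon>"
    by (rule part1[OF gamma r_bounds R_neg subopt])
  have c: "disc_value P pol d0 \<gamma> (cost s_tri)
     \<le> disc_value P (shield ?I \<mu> pol) d0 \<gamma> (cost s_tri) + (\<Sum>t. \<gamma>^t * Dst P pol d0 ?I t)"
    by (rule cost_part[OF gamma distinct tri_step circ_abs Isafe])
  have e: "(\<Sum>t. \<gamma>^t * Dst P pol d0 ?I t) \<le> \<epsilon> / \<bar>R\<bar>"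
    by (rule eps_bound[OF gamma r_bounds R_neg partial subopt])
  from p1 c e show ?thesis by linarith
qed

end
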